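(* Let $\mathsf{S}$ be the $2D\times 2D$ stability matrix of the RPA equation $\mathsf{S}\,\mathbf{x}_\nu=\omega_\nu\mathsf{N}\,\mathbf{x}_\nu$ with norm matrix $\mathsf{N}=\begin{pmatrix} 1&0\\ 0&-1 \end{pmatrix}$, where $\mathsf{S}=\mathsf{S}^\dagger$ and $\mathsf{\Sigma}_x\,\mathsf{S}^\ast\,\mathsf{\Sigma}_x = \mathsf{S}$ with $\mathsf{\Sigma}_x = \begin{pmatrix} 0&1\\1&0 \end{pmatrix}$. If $\mathsf{S}$ is positive-semidefinite, then every solution of the RPA equation is either a physical solution (a real nonzero eigenvalue, appearing in a pair $\pm\omega_\nu$, whose eigenvector is normalizable, i.e. has nonzero norm $\mathbf{x}_\nu^\dagger\mathsf{N}\,\mathbf{x}_\nu$, positive for $\omega_\nu>0$) or a Nambu-Goldstone (NG) mode solution (eigenvalue $\omega_\nu=0$, i.e. $\mathsf{S}\,\mathbf{x}_\nu=\mathbf{0}$); and the dimension of any Jordan block of $\mathsf{N\,S}$ associated with an NG-mode solution does not exceed two.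
   Context: The RPA equation is read as the eigenvalue problem of $\mathsf{N\,S}$. The classification into physical solutions and NG-mode solutions corresponds to Classes (1) and (5), respectively, of the five-class classification of RPA solutions in H. Nakada, PTEP (2016) (Prop. 2 there), based on the so-called UL- and LR-dualities. A Jordan block of $\mathsf{N\,S}$ at eigenvalue $0$ built on $\boldsymbol{\xi}_1=\mathbf{x}_\nu$ satisfies $\mathsf{S}\,\boldsymbol{\xi}_2 = i c_1\,\mathsf{N}\,\mathbf{x}_\nu$ with $c_1\in\mathbf{C}$, $c_1\neq 0$. *)

theory Defs
  imports "Jordan_Normal_Form.Jordan_Normal_Form"
begin

text \<open>Matrices are 2D x 2D complex matrices (Jordan_Normal_Form 'mat'), indices
  0..D-1 form the upper block (X amplitudes), D..2D-1 the lower block (Y amplitudes).\<close>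

definition normM :: "nat \<Rightarrow> complex mat" where
  "normM D = mat (2*D) (2*D) (\<lambda>(i,j). if i = j then (if i < D then 1 else -1) else 0)"

definition sigmaX :: "nat \<Rightarrow> complex mat" where
  "sigmaX D = mat (2*D) (2*D)
     (\<lambda>(i,j). if j = (if i < D then i + D else i - D) then 1 else 0)"

definition cnj_mat :: "complex mat \<Rightarrow> complex mat" where
  "cnj_mat A = map_mat cnj A"

definition dagger :: "complex mat \<Rightarrow> complex mat" where
  "dagger A = transpose_mat (cnj_mat A)"

definition cnj_vec :: "complex vec \<Rightarrow> complex vec" where
  "cnj_vec v = map_vec cnj v"

definition qform :: "complex mat \<Rightarrow> complex vec \<Rightarrow> complex" where
  "qform A x = cnj_vec x \<bullet> (A *\<^sub>v x)"

definition psd_mat :: "nat \<Rightarrow> complex mat \<Rightarrow> bool" where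
  "psd_mat n A \<longleftrightarrow> (\<forall>x \<in> carrier_vec n. Im (qform A x) = 0 \<and> Re (qform A x) \<ge> 0)"

definition rpa_solution :: "nat \<Rightarrow> complex mat \<Rightarrow> complex \<Rightarrow> complex vec \<Rightarrow> bool" where
  "rpa_solution D S \<omega> x \<longleftrightarrow> x \<in> carrier_vec (2*D) \<and> x \<noteq> 0\<^sub>v (2*D) \<and>
     S *\<^sub>v x = \<omega> \<cdot>\<^sub>v (normM D *\<^sub>v x)"

end

theory Submission
  imports Defs "Jordan_Normal_Form.Jordan_Normal_Form_Uniqueness"
begin

lemma normM_carrier[simp]: "normM D \<in> carrier_mat (2*D) (2*D)"
  unfolding normM_def by auto

lemma normM_mult_vec: assumes "x \<in> carrier_vec (2*D)"
  shows "normM D *\<^sub>v x = vec (2*D) (\<lambda>i. if i < D then x$i else - x$i)"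
proof (rule eq_vecI)
  fix i assume i: "i < dim_vec (vec (2*D) (\<lambda>i. if i < D then x$i else - x$i))"
  have "(normM D *\<^sub>v x) $ i = (\<Sum>k\<in>{0..<2*D}. (if i = k then (if i < D then 1 else -1) else 0) * x $ k)"
    using i assms unfolding normM_def by (auto simp: scalar_prod_def row_def)
  also have "\<dots> = (if i < D then x$i else - x$i)" using i
    by (simp add: if_distrib[of "\<lambda>z. z * _"] cong: if_cong)
  finally show "(normM D *\<^sub>v x) $ i = vec (2*D) (\<lambda>i. if i < D then x$i else - x$i) $ i" using i by simp
qed (auto simp: normM_def)

lemma normM_normM: assumes "x \<in> carrier_vec (2*D)"
  shows "normM D *\<^sub>v (normM D *\<^sub>v x) = x"
  using assms by (auto simp: normM_mult_vec intro!: eq_vecI)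

definition sig :: "nat \<Rightarrow> nat \<Rightarrow> nat" where "sig D i = (if i < D then i + D else i - D)"

lemma sigmaX_left: assumes "M \<in> carrier_mat (2*D) m"
  shows "sigmaX D * M = mat (2*D) m (\<lambda>(i,j). M $$ (sig D i, j))"
proof (rule eq_matI)
  fix i j assume i: "i < dim_row (mat (2*D) m (\<lambda>(i,j). M $$ (sig D i, j)))"
    and j: "j < dim_col (mat (2*D) m (\<lambda>(i,j). M $$ (sig D i, j)))"
  have "(sigmaX D * M) $$ (i,j) = (\<Sum>k\<in>{0..<2*D}. (if k = sig D i then 1 else 0) * M $$ (k,j))"
    using i j assms unfolding sigmaX_def sig_def by (auto simp: scalar_prod_def row_def col_def intro!: sum.cong)
  also have "\<dots> = M $$ (sig D i, j)" using i
    by (simp add: if_distrib[of "\<lambda>z. z * _"] sig_def cong: if_cong) linarith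
  finally show "(sigmaX D * M) $$ (i,j) = mat (2*D) m (\<lambda>(i,j). M $$ (sig D i, j)) $$ (i,j)" using i j by simp
qed (use assms in \<open>auto simp: sigmaX_def\<close>)

lemma sigmaX_right: assumes "M \<in> carrier_mat m (2*D)"
  shows "M * sigmaX D = mat m (2*D) (\<lambda>(i,j). M $$ (i, sig D j))"
proof (rule eq_matI)
  fix i j assume i: "i < dim_row (mat m (2*D) (\<lambda>(i,j). M $$ (i, sig D j)))"
    and j: "j < dim_col (mat m (2*D) (\<lambda>(i,j). M $$ (i, sig D j)))"
  have "(M * sigmaX D) $$ (i,j) = (\<Sum>k\<in>{0..<2*D}. M $$ (i,k) * (if k = sig D j then 1 else 0))"
    using i j assms unfolding sigmaX_def sig_def by (auto simp: scalar_prod_def row_def col_def intro!: sum.cong)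
  also have "\<dots> = M $$ (i, sig D j)" using j
    by (simp add: if_distrib[of "\<lambda>z. _ * z"] sig_def cong: if_cong) linarith
  finally show "(M * sigmaX D) $$ (i,j) = mat m (2*D) (\<lambda>(i,j). M $$ (i, sig D j)) $$ (i,j)" using i j by simp
qed (use assms in \<open>auto simp: sigmaX_def\<close>)

lemma sigmaX_vec: assumes "x \<in> carrier_vec (2*D)"
  shows "sigmaX D *\<^sub>v x = vec (2*D) (\<lambda>i. x $ sig D i)"
proof (rule eq_vecI)
  fix i assume i: "i < dim_vec (vec (2*D) (\<lambda>i. x $ sig D i))"
  have "(sigmaX D *\<^sub>v x) $ i = (\<Sum>k\<in>{0..<2*D}. (if k = sig D i then 1 else 0) * x $ k)"
    using i assms unfolding sigmaX_def sig_def by (auto simp: scalar_prod_def row_def intro!: sum.cong)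
  also have "\<dots> = x $ sig D i" using i
    by (simp add: if_distrib[of "\<lambda>z. z * _"] sig_def cong: if_cong) linarith
  finally show "(sigmaX D *\<^sub>v x) $ i = vec (2*D) (\<lambda>i. x $ sig D i) $ i" using i by simp
qed (auto simp: sigmaX_def)


lemma dagger_entry: assumes "A \<in> carrier_mat n n" "dagger A = A" "i < n" "j < n"
  shows "A $$ (i,j) = cnj (A $$ (j,i))"
proof -
  have "dagger A $$ (i,j) = cnj (A $$ (j,i))"
    using assms(1,3,4) unfolding dagger_def cnj_mat_def by auto
  thus ?thesis using assms(2) by simp
qed

lemma bil_sum: assumes "A \<in> carrier_mat n n" "x \<in> carrier_vec n" "y \<in> carrier_vec n"
  shows "cnj_vec x \<bullet> (A *\<^sub>v y) = (\<Sum>i\<in>{0..<n}. \<Sum>j\<in>{0..<n}. cnj (x$i) * A$$(i,j) * y$j)"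
  using assms unfolding cnj_vec_def
  by (auto simp: scalar_prod_def row_def sum_distrib_left mult.assoc intro!: sum.cong)

lemma herm: assumes A: "A \<in> carrier_mat n n" "dagger A = A" and x: "x \<in> carrier_vec n" and y: "y \<in> carrier_vec n"
  shows "cnj_vec x \<bullet> (A *\<^sub>v y) = cnj (cnj_vec y \<bullet> (A *\<^sub>v x))"
proof -
  have "cnj (cnj_vec y \<bullet> (A *\<^sub>v x)) = (\<Sum>i\<in>{0..<n}. \<Sum>j\<in>{0..<n}. y$i * cnj (A$$(i,j)) * cnj (x$j))"
    unfolding bil_sum[OF A(1) y x] by (simp add: cnj_sum)
  also have "\<dots> = (\<Sum>i\<in>{0..<n}. \<Sum>j\<in>{0..<n}. y$i * A$$(j,i) * cnj (x$j))"
  proof (intro sum.cong refl)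
    fix i j assume "i \<in> {0..<n}" "j \<in> {0..<n}"
    then show "y$i * cnj (A$$(i,j)) * cnj (x$j) = y$i * A$$(j,i) * cnj (x$j)"
      using dagger_entry[OF A, of j i] by simp
  qed
  also have "\<dots> = (\<Sum>j\<in>{0..<n}. \<Sum>i\<in>{0..<n}. cnj (x$j) * A$$(j,i) * y$i)"
    by (subst sum.swap) (simp add: mult_ac)
  also have "\<dots> = cnj_vec x \<bullet> (A *\<^sub>v y)" unfolding bil_sum[OF A(1) x y] ..
  finally show ?thesis by simp
qed

lemma qform_add: assumes A: "A \<in> carrier_mat n n" and x: "x \<in> carrier_vec n" and y: "y \<in> carrier_vec n"
  shows "qform A (x + c \<cdot>\<^sub>v y) = qform A x + c * (cnj_vec x \<bullet> (A *\<^sub>v y))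
     + cnj c * (cnj_vec y \<bullet> (A *\<^sub>v x)) + cnj c * c * qform A y"
proof -
  have z: "x + c \<cdot>\<^sub>v y \<in> carrier_vec n" using x y by auto
  have "qform A (x + c \<cdot>\<^sub>v y) = (\<Sum>i\<in>{0..<n}. \<Sum>j\<in>{0..<n}. cnj ((x + c \<cdot>\<^sub>v y)$i) * A$$(i,j) * (x + c \<cdot>\<^sub>v y)$j)"
    unfolding qform_def by (rule bil_sum[OF A z z])
  also have "\<dots> = (\<Sum>i\<in>{0..<n}. \<Sum>j\<in>{0..<n}. cnj (x$i) * A$$(i,j) * x$j + c * (cnj (x$i) * A$$(i,j) * y$j)
     + cnj c * (cnj (y$i) * A$$(i,j) * x$j) + cnj c * c * (cnj (y$i) * A$$(i,j) * y$j))"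
    using x y by (intro sum.cong refl) (simp add: ring_distribs mult.assoc mult.left_commute)
  also have "\<dots> = qform A x + c * (cnj_vec x \<bullet> (A *\<^sub>v y))
     + cnj c * (cnj_vec y \<bullet> (A *\<^sub>v x)) + cnj c * c * qform A y"
    unfolding qform_def bil_sum[OF A x y] bil_sum[OF A y x] bil_sum[OF A x x] bil_sum[OF A y y]
    by (simp only: sum.distrib sum_distrib_left mult.assoc)
  finally show ?thesis .
qed

lemma normM_herm: "dagger (normM D) = normM D"
  unfolding dagger_def cnj_mat_def normM_def by (auto intro!: eq_matI)


lemma real_ineq: fixes r s :: real assumes "r \<ge> 0" "s \<ge> 0"
  and "2 * (-(r/(s+1))) * r + (-(r/(s+1)))^2 * s \<ge> 0" shows "r = 0"
proof -
  have den: "s + 1 \<noteq> 0" using assms(2) by simp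
  have e: "2 * (-(r/(s+1))) * r + (-(r/(s+1)))^2 * s = - (r^2*(s+2)) / (s+1)^2"
    using den by (simp add: divide_simps power2_eq_square) (simp add: algebra_simps)
  have "(s+1)^2 > 0" using assms(2) by simp
  moreover have "- (r^2*(s+2)) / (s+1)^2 \<ge> 0" using assms(3) unfolding e .
  ultimately have "- (r^2*(s+2)) \<ge> 0"
    by (smt (verit) zero_le_divide_iff)
  moreover have "r^2*(s+2) \<ge> 0" using assms by simp
  ultimately have "r^2*(s+2) = 0" by linarith
  thus ?thesis using assms by simp
qed

lemma cnj_sprod_self: assumes "y \<in> carrier_vec n"
  shows "cnj_vec y \<bullet> y = complex_of_real (\<Sum>i\<in>{0..<n}. ((Re (y$i))^2 + (Im (y$i))^2))"
  using assms unfolding cnj_vec_def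
  by (simp add: scalar_prod_def of_real_sum complex_mult_cnj mult.commute)

lemma sum_sq_zero_vec: assumes "y \<in> carrier_vec n" "(\<Sum>i\<in>{0..<n}. ((Re (y$i))^2 + (Im (y$i))^2)) = 0"
  shows "y = 0\<^sub>v n"
proof (rule eq_vecI)
  fix i assume i: "i < dim_vec (0\<^sub>v n :: complex vec)"
  have "\<forall>i\<in>{0..<n}. ((Re (y$i))^2 + (Im (y$i))^2) = 0"
    using assms(2) by (subst sum_nonneg_eq_0_iff[symmetric]) auto
  then have "(Re (y$i))^2 + (Im (y$i))^2 = 0" using i by auto
  then have "Re (y$i) = 0" "Im (y$i) = 0" by (smt (verit) zero_le_power2 power_zero_numeral zero_eq_power2)+
  then show "y $ i = 0\<^sub>v n $ i" using i by (auto simp: complex_eq_iff)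
qed (use assms in auto)

lemma real_of_psd: assumes "psd_mat n A" "x \<in> carrier_vec n"
  shows "qform A x = complex_of_real (Re (qform A x))" "Re (qform A x) \<ge> 0"
  using assms unfolding psd_mat_def by (auto simp: complex_eq_iff)

lemma psd_ker: assumes A: "A \<in> carrier_mat n n" "dagger A = A" and psd: "psd_mat n A"
  and x: "x \<in> carrier_vec n" and q0: "qform A x = 0"
  shows "A *\<^sub>v x = 0\<^sub>v n"
proof -
  define y where "y = A *\<^sub>v x"
  have y: "y \<in> carrier_vec n" using A x unfolding y_def by auto
  define r where "r = (\<Sum>i\<in>{0..<n}. ((Re (y$i))^2 + (Im (y$i))^2))"
  have r0: "r \<ge> 0" unfolding r_def by (intro sum_nonneg) auto
  have a: "cnj_vec y \<bullet> (A *\<^sub>v x) = complex_of_real r"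
    unfolding r_def y_def[symmetric] by (rule cnj_sprod_self[OF y])
  have b: "cnj_vec x \<bullet> (A *\<^sub>v y) = complex_of_real r"
    using herm[OF A x y] a by simp
  define s where "s = Re (qform A y)"
  have s: "qform A y = complex_of_real s" "s \<ge> 0" using real_of_psd[OF psd y] unfolding s_def by auto
  define t where "t = -(r/(s+1))"
  have z: "x + complex_of_real t \<cdot>\<^sub>v y \<in> carrier_vec n" using x y by auto
  have "qform A (x + complex_of_real t \<cdot>\<^sub>v y) = complex_of_real (2 * t * r + t^2 * s)"
    unfolding qform_add[OF A(1) x y] q0 a b s(1) by (simp add: power2_eq_square)
  with real_of_psd(2)[OF psd z] have "2 * t * r + t^2 * s \<ge> 0" by simp
  hence "r = 0" using real_ineq[OF r0 s(2)] unfolding t_def by simp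
  hence "y = 0\<^sub>v n" using sum_sq_zero_vec[OF y] unfolding r_def by simp
  thus ?thesis unfolding y_def .
qed


lemma pow_mat_vec: assumes A: "A \<in> carrier_mat n n" and v: "v \<in> carrier_vec n"
  shows "(A ^\<^sub>m Suc k) *\<^sub>v v = (A ^\<^sub>m k) *\<^sub>v (A *\<^sub>v v)"
  using A v by (simp add: assoc_mult_mat_vec[of _ n n _ n])

lemma pow2_vec: assumes A: "A \<in> carrier_mat n n" and v: "v \<in> carrier_vec n"
  shows "(A ^\<^sub>m 2) *\<^sub>v v = A *\<^sub>v (A *\<^sub>v v)"
proof -
  have "(A ^\<^sub>m Suc (Suc 0)) *\<^sub>v v = A *\<^sub>v (A *\<^sub>v v)"
    using A v by (simp add: pow_mat_vec[OF A] del: pow_mat.simps(2))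
  thus ?thesis by (simp add: numeral_2_eq_2)
qed

lemma pow3_vec: assumes A: "A \<in> carrier_mat n n" and v: "v \<in> carrier_vec n"
  shows "(A ^\<^sub>m 3) *\<^sub>v v = A *\<^sub>v (A *\<^sub>v (A *\<^sub>v v))"
proof -
  have "(A ^\<^sub>m Suc (Suc (Suc 0))) *\<^sub>v v = A *\<^sub>v (A *\<^sub>v (A *\<^sub>v v))"
    using A v by (simp add: pow_mat_vec[OF A] del: pow_mat.simps(2))
  thus ?thesis by (simp add: numeral_3_eq_3)
qed

lemma min_sum_list: "sum_list (map (\<lambda>n. min (2::nat) n) xs) \<le> sum_list (map (\<lambda>n. min 3 n) xs)"
  by (induct xs) auto

lemma min_sum_list_eq: "sum_list (map (\<lambda>n. min (3::nat) n) xs) = sum_list (map (\<lambda>n. min 2 n) xs)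
  \<Longrightarrow> \<forall>x\<in>set xs. x \<le> 2"
proof (induct xs)
  case (Cons a xs)
  have "min 2 a \<le> min (3::nat) a" by simp
  with min_sum_list[of xs] Cons(2) have "min 3 a = min 2 a"
    "sum_list (map (\<lambda>n. min (3::nat) n) xs) = sum_list (map (\<lambda>n. min 2 n) xs)" by auto
  with Cons(1) show ?case by auto
qed simp

lemma char0: assumes "A \<in> carrier_mat n n" shows "char_matrix A 0 = A"
  using assms unfolding char_matrix_def by (auto intro!: eq_matI)

lemma jordan_bound:
  fixes A :: "complex mat"
  assumes A: "A \<in> carrier_mat n n"
    and ker: "\<And>v. v \<in> carrier_vec n \<Longrightarrow> A *\<^sub>v (A *\<^sub>v (A *\<^sub>v v)) = 0\<^sub>v n \<Longrightarrow> A *\<^sub>v (A *\<^sub>v v) = 0\<^sub>v n"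
    and jnf: "jordan_nf A n_as"
  shows "\<forall>(k, a) \<in> set n_as. a = 0 \<longrightarrow> k \<le> 2"
proof -
  have A2: "A ^\<^sub>m 2 \<in> carrier_mat n n" and A3: "A ^\<^sub>m 3 \<in> carrier_mat n n" using A by auto
  have "mat_kernel (A ^\<^sub>m 3) = mat_kernel (A ^\<^sub>m 2)"
    unfolding mat_kernel_def using A ker
    by (auto simp: pow2_vec[OF A] pow3_vec[OF A])
  hence "kernel_dim (A ^\<^sub>m 3) = kernel_dim (A ^\<^sub>m 2)"
    unfolding kernel_dim_def using A by simp
  hence "dim_gen_eigenspace A 0 3 = dim_gen_eigenspace A 0 2"
    unfolding dim_gen_eigenspace_def char0[OF A] .
  hence "sum_list (map (\<lambda>n. min 3 n) (map fst [(n, e)\<leftarrow>n_as . e = 0]))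
       = sum_list (map (\<lambda>n. min 2 n) (map fst [(n, e)\<leftarrow>n_as . e = 0]))"
    unfolding dim_gen_eigenspace[OF jnf] .
  from min_sum_list_eq[OF this] show ?thesis by force
qed


lemma sig_lt: "i < 2*D \<Longrightarrow> sig D i < 2*D" unfolding sig_def by auto
lemma sig_sig: "i < 2*D \<Longrightarrow> sig D (sig D i) = i" unfolding sig_def by auto
lemma sig_less: "i < 2*D \<Longrightarrow> sig D i < D \<longleftrightarrow> \<not> i < D" unfolding sig_def by auto

lemma sum_sig: "(\<Sum>j\<in>{0..<2*D}. f (sig D j)) = (\<Sum>j\<in>{0..<2*D}. f j)"
  by (rule sum.reindex_bij_witness[of _ "sig D" "sig D"]) (auto simp: sig_lt sig_sig)

lemma S_sym: assumes S: "S \<in> carrier_mat (2*D) (2*D)"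
  and sx: "sigmaX D * cnj_mat S * sigmaX D = S" and i: "i < 2*D" and j: "j < 2*D"
  shows "S $$ (i,j) = cnj (S $$ (sig D i, sig D j))"
proof -
  have c: "cnj_mat S \<in> carrier_mat (2*D) (2*D)" using S unfolding cnj_mat_def by auto
  have c2: "sigmaX D * cnj_mat S \<in> carrier_mat (2*D) (2*D)" using c by (auto simp: sigmaX_def)
  have "S $$ (i,j) = (sigmaX D * cnj_mat S * sigmaX D) $$ (i,j)" using sx by simp
  also have "\<dots> = (sigmaX D * cnj_mat S) $$ (i, sig D j)"
    unfolding sigmaX_right[OF c2] using i j by simp
  also have "\<dots> = cnj_mat S $$ (sig D i, sig D j)"
    unfolding sigmaX_left[OF c] using i j sig_lt by simp
  also have "\<dots> = cnj (S $$ (sig D i, sig D j))"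
    using S i j sig_lt unfolding cnj_mat_def by simp
  finally show ?thesis .
qed

lemma pair_sol: assumes S: "S \<in> carrier_mat (2*D) (2*D)"
  and sx: "sigmaX D * cnj_mat S * sigmaX D = S"
  and x: "x \<in> carrier_vec (2*D)" and eq: "S *\<^sub>v x = \<omega> \<cdot>\<^sub>v (normM D *\<^sub>v x)"
  and om: "cnj \<omega> = \<omega>"
  shows "S *\<^sub>v (sigmaX D *\<^sub>v cnj_vec x) = (-\<omega>) \<cdot>\<^sub>v (normM D *\<^sub>v (sigmaX D *\<^sub>v cnj_vec x))"
proof -
  have cx: "cnj_vec x \<in> carrier_vec (2*D)" using x unfolding cnj_vec_def by auto
  have y: "sigmaX D *\<^sub>v cnj_vec x = vec (2*D) (\<lambda>i. cnj (x $ sig D i))"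
    unfolding sigmaX_vec[OF cx] using x sig_lt unfolding cnj_vec_def by (auto intro!: eq_vecI)
  have yc: "vec (2*D) (\<lambda>i. cnj (x $ sig D i)) \<in> carrier_vec (2*D)" by simp
  show ?thesis
  proof (rule eq_vecI)
    fix i assume "i < dim_vec ((-\<omega>) \<cdot>\<^sub>v (normM D *\<^sub>v (sigmaX D *\<^sub>v cnj_vec x)))"
    hence i: "i < 2*D" by (simp add: y normM_mult_vec[OF yc])
    have exi: "(S *\<^sub>v x) $ (sig D i) = \<omega> * (if sig D i < D then x $ sig D i else - x $ sig D i)"
      using eq sig_lt[OF i] by (simp add: normM_mult_vec[OF x])
    have "(S *\<^sub>v (sigmaX D *\<^sub>v cnj_vec x)) $ i = (\<Sum>j\<in>{0..<2*D}. S $$ (i,j) * cnj (x $ sig D j))"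
      unfolding y using S i by (simp add: scalar_prod_def row_def)
    also have "\<dots> = (\<Sum>j\<in>{0..<2*D}. cnj (S $$ (sig D i, sig D j) * x $ sig D j))"
      using S_sym[OF S sx i] by (intro sum.cong refl) simp
    also have "\<dots> = (\<Sum>j\<in>{0..<2*D}. cnj (S $$ (sig D i, j) * x $ j))"
      by (rule sum_sig)
    also have "\<dots> = cnj ((S *\<^sub>v x) $ (sig D i))"
      using S x sig_lt[OF i] by (simp add: scalar_prod_def row_def cnj_sum)
    also have "\<dots> = ((-\<omega>) \<cdot>\<^sub>v (normM D *\<^sub>v (sigmaX D *\<^sub>v cnj_vec x))) $ i"
      unfolding exi using i om sig_less[OF i] by (simp add: y normM_mult_vec[OF yc])
    finally show "(S *\<^sub>v (sigmaX D *\<^sub>v cnj_vec x)) $ i = ((-\<omega>) \<cdot>\<^sub>v (normM D *\<^sub>v (sigmaX D *\<^sub>v cnj_vec x))) $ i" .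
  qed (use S in \<open>simp add: y normM_mult_vec[OF yc]\<close>)
qed


lemma mat_mult_zero_vec[simp]: "A \<in> carrier_mat n m \<Longrightarrow> A *\<^sub>v 0\<^sub>v m = 0\<^sub>v n"
  by (intro eq_vecI) auto

lemma smult_zero_vec'[simp]: "(c::'a::semiring_0) \<cdot>\<^sub>v 0\<^sub>v n = 0\<^sub>v n"
  by (intro eq_vecI) auto

lemma sigmaX_carrier[simp]: "sigmaX D \<in> carrier_mat (2*D) (2*D)"
  unfolding sigmaX_def by auto

theorem proposition1:
  fixes D :: nat and S :: "complex mat"
  assumes "S \<in> carrier_mat (2*D) (2*D)"
    and "dagger S = S"
    and "sigmaX D * cnj_mat S * sigmaX D = S"
    and "psd_mat (2*D) S"
  shows "(\<forall>\<omega> x. rpa_solution D S \<omega> x \<longrightarrow>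
           ((\<omega> \<in> \<real> \<and> \<omega> \<noteq> 0 \<and> (\<exists>y. rpa_solution D S (-\<omega>) y)
             \<and> qform (normM D) x \<noteq> 0
             \<and> (Re \<omega> > 0 \<longrightarrow> Re (qform (normM D) x) > 0))
           \<or> (\<omega> = 0 \<and> S *\<^sub>v x = 0\<^sub>v (2*D))))
     \<and> (\<forall>n_as. jordan_nf (normM D * S) n_as \<longrightarrow> (\<forall>(k, a) \<in> set n_as. a = 0 \<longrightarrow> k \<le> 2))"
proof
  note S = assms(1) and herS = assms(2) and sx = assms(3) and psd = assms(4)
  let ?N = "normM D"
  have N: "?N \<in> carrier_mat (2*D) (2*D)" by simp
  show "\<forall>\<omega> x. rpa_solution D S \<omega> x \<longrightarrow>
           ((\<omega> \<in> \<real> \<and> \<omega> \<noteq> 0 \<and> (\<exists>y. rpa_solution D S (-\<omega>) y)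
             \<and> qform (normM D) x \<noteq> 0
             \<and> (Re \<omega> > 0 \<longrightarrow> Re (qform (normM D) x) > 0))
           \<or> (\<omega> = 0 \<and> S *\<^sub>v x = 0\<^sub>v (2*D)))"
  proof (intro allI impI)
    fix \<omega> x assume sol: "rpa_solution D S \<omega> x"
    hence x: "x \<in> carrier_vec (2*D)" and x0: "x \<noteq> 0\<^sub>v (2*D)"
      and eq: "S *\<^sub>v x = \<omega> \<cdot>\<^sub>v (?N *\<^sub>v x)" unfolding rpa_solution_def by auto
    have Nx: "?N *\<^sub>v x \<in> carrier_vec (2*D)" by (rule mult_mat_vec_carrier[OF N x])
    have cx: "cnj_vec x \<in> carrier_vec (2*D)" using x unfolding cnj_vec_def by auto
    have qS: "qform S x = \<omega> * qform ?N x"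
      unfolding qform_def eq using cx Nx by simp
    have qNr: "qform ?N x = complex_of_real (Re (qform ?N x))"
      using herm[OF N normM_herm x x] unfolding qform_def[symmetric] by (simp add: complex_eq_iff)
    have qSr: "qform S x = complex_of_real (Re (qform S x))" "Re (qform S x) \<ge> 0"
      using real_of_psd[OF psd x] by auto
    have Nx0: "?N *\<^sub>v x \<noteq> 0\<^sub>v (2*D)"
    proof
      assume "?N *\<^sub>v x = 0\<^sub>v (2*D)"
      hence "?N *\<^sub>v (?N *\<^sub>v x) = 0\<^sub>v (2*D)" using N by simp
      thus False using normM_normM[OF x] x0 by simp
    qed
    show "(\<omega> \<in> \<real> \<and> \<omega> \<noteq> 0 \<and> (\<exists>y. rpa_solution D S (-\<omega>) y)
             \<and> qform (normM D) x \<noteq> 0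
             \<and> (Re \<omega> > 0 \<longrightarrow> Re (qform (normM D) x) > 0))
           \<or> (\<omega> = 0 \<and> S *\<^sub>v x = 0\<^sub>v (2*D))"
    proof (cases "qform S x = 0")
      case True
      have Sx: "S *\<^sub>v x = 0\<^sub>v (2*D)" by (rule psd_ker[OF S herS psd x True])
      have "\<omega> = 0"
      proof (rule ccontr)
        assume w: "\<omega> \<noteq> 0"
        have "\<omega> \<cdot>\<^sub>v (?N *\<^sub>v x) = 0\<^sub>v (2*D)" using Sx eq by simp
        hence "inverse \<omega> \<cdot>\<^sub>v (\<omega> \<cdot>\<^sub>v (?N *\<^sub>v x)) = 0\<^sub>v (2*D)" by simp
        hence "?N *\<^sub>v x = 0\<^sub>v (2*D)" using w by (simp add: smult_smult_assoc)
        with Nx0 show False by simp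
      qed
      with Sx show ?thesis by simp
    next
      case False
      define s where "s = Re (qform S x)"
      define u where "u = Re (qform ?N x)"
      have s0: "s > 0" using qSr False unfolding s_def by (metis less_eq_real_def of_real_0)
      have su: "complex_of_real s = \<omega> * complex_of_real u"
        using qS qSr(1) qNr unfolding s_def u_def by simp
      have u0: "u \<noteq> 0" using su s0 by auto
      have wr: "\<omega> = complex_of_real (s / u)" using su u0 by (simp add: field_simps)
      have cw: "cnj \<omega> = \<omega>" unfolding wr by simp
      have w0: "\<omega> \<noteq> 0" using wr s0 u0 by simp
      have qN0: "qform ?N x \<noteq> 0" using u0 unfolding u_def by auto
      have pos: "Re \<omega> > 0 \<longrightarrow> Re (qform ?N x) > 0"
      proof
        assume "Re \<omega> > 0"
        hence "s / u > 0" unfolding wr by simp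
        thus "Re (qform ?N x) > 0" using s0 unfolding u_def[symmetric]
          by (simp add: zero_less_divide_iff)
      qed
      define y where "y = sigmaX D *\<^sub>v cnj_vec x"
      have yc: "y \<in> carrier_vec (2*D)" unfolding y_def by (rule mult_mat_vec_carrier[OF sigmaX_carrier cx])
      have y0: "y \<noteq> 0\<^sub>v (2*D)"
      proof
        assume "y = 0\<^sub>v (2*D)"
        hence "sigmaX D *\<^sub>v y = 0\<^sub>v (2*D)" by simp
        moreover have "sigmaX D *\<^sub>v y = cnj_vec x"
          unfolding y_def sigmaX_vec[OF cx] sigmaX_vec[OF vec_carrier]
          using cx sig_sig sig_lt by (auto intro!: eq_vecI)
        ultimately have "cnj_vec x = 0\<^sub>v (2*D)" by simp
        hence "x = 0\<^sub>v (2*D)"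
        proof (intro eq_vecI)
          fix i assume c: "cnj_vec x = 0\<^sub>v (2*D)" and i: "i < dim_vec (0\<^sub>v (2 * D) :: complex vec)"
          have "cnj_vec x $ i = 0" using c i by simp
          thus "x $ i = 0\<^sub>v (2 * D) $ i" using x i unfolding cnj_vec_def by simp
        qed (use x in simp)
        with x0 show False by simp
      qed
      have "rpa_solution D S (-\<omega>) y"
        unfolding rpa_solution_def using yc y0 pair_sol[OF S sx x eq cw] unfolding y_def by simp
      thus ?thesis using wr w0 qN0 pos by auto
    qed
  qed
  show "\<forall>n_as. jordan_nf (?N * S) n_as \<longrightarrow> (\<forall>(k, a) \<in> set n_as. a = 0 \<longrightarrow> k \<le> 2)"
  proof (intro allI impI)
    fix n_as assume jnf: "jordan_nf (?N * S) n_as"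
    have A: "?N * S \<in> carrier_mat (2*D) (2*D)" by (rule mult_carrier_mat[OF N S])
    have NA: "\<And>w. w \<in> carrier_vec (2*D) \<Longrightarrow> ?N *\<^sub>v ((?N * S) *\<^sub>v w) = S *\<^sub>v w"
    proof -
      fix w :: "complex vec" assume w: "w \<in> carrier_vec (2*D)"
      have Sw: "S *\<^sub>v w \<in> carrier_vec (2*D)" by (rule mult_mat_vec_carrier[OF S w])
      show "?N *\<^sub>v ((?N * S) *\<^sub>v w) = S *\<^sub>v w"
        unfolding assoc_mult_mat_vec[OF N S w] by (rule normM_normM[OF Sw])
    qed
    show "\<forall>(k, a) \<in> set n_as. a = 0 \<longrightarrow> k \<le> 2"
    proof (rule jordan_bound[OF A _ jnf])
      fix v assume v: "v \<in> carrier_vec (2*D)"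
        and a3: "(?N * S) *\<^sub>v ((?N * S) *\<^sub>v ((?N * S) *\<^sub>v v)) = 0\<^sub>v (2*D)"
      define x2 where "x2 = (?N * S) *\<^sub>v v"
      define x1 where "x1 = (?N * S) *\<^sub>v x2"
      have x2: "x2 \<in> carrier_vec (2*D)" and x1: "x1 \<in> carrier_vec (2*D)"
        unfolding x1_def x2_def using A v by auto
      have S1: "S *\<^sub>v x1 = 0\<^sub>v (2*D)"
        using NA[OF x1] a3 mat_mult_zero_vec[OF N] unfolding x1_def x2_def by simp
      have S2: "S *\<^sub>v x2 = ?N *\<^sub>v x1" using NA[OF x2] unfolding x1_def by simp
      have Sv: "S *\<^sub>v v = ?N *\<^sub>v x2" using NA[OF v] unfolding x2_def by simp
      have "cnj_vec x1 \<bullet> (?N *\<^sub>v x2) = 0"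
        using herm[OF S herS x1 v] S1 unfolding Sv[symmetric]
        using v unfolding cnj_vec_def by simp
      hence "qform S x2 = 0"
        unfolding qform_def S2 herm[OF N normM_herm x2 x1] by simp
      hence "S *\<^sub>v x2 = 0\<^sub>v (2*D)" by (rule psd_ker[OF S herS psd x2])
      hence "?N *\<^sub>v (?N *\<^sub>v x1) = 0\<^sub>v (2*D)" unfolding S2 using mat_mult_zero_vec[OF N] by simp
      hence "x1 = 0\<^sub>v (2*D)" unfolding normM_normM[OF x1] .
      thus "(?N * S) *\<^sub>v ((?N * S) *\<^sub>v v) = 0\<^sub>v (2*D)"
        unfolding x1_def x2_def .
    qed
  qed
qed

end
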